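(* Let $p,p'\ge 1$ be integers with $|p-p'|=1$, let $\alpha_{(p,p')}$ be the morphism $a\mapsto a^pb$, $b\mapsto a^{p'}b$, and let $Y$ be a finite word over $\{a,b\}$ such that $X=\alpha_{(p,p')}(Y)$ is a finite Sturmian word. Then: (i) $|K_{(X,a)}| = p|Y|_a + p'|Y|_b$; (ii) $|K_{(X,b)}| = |Y|$; (iii) $|K_{(X,aa)}| = (p-1)|Y|_a + (p'-1)|Y|_b$; (iv) $|K_X| = 2|X|-2|Y|$, and this equals $2|Y|_a+2p'|Y|$ when $p>p'$ and $2|Y|_b+2p|Y|$ when $p<p'$.
   Context: Words are over the alphabet $\{a,b\}$. A Sturmian word is a right-infinite aperiodic word over $\{a,b\}$ of minimal factor complexity (exactly $n+1$ distinct factors of each length $n$); a finite Sturmian word is a finite factor of some Sturmian word. $|X|$ is the length of $X$ and $|X|_l$ the number of occurrences of the letter $l$ in $X$; $X[i]$ is the letter at position $i$ and $X[i..j]$ the factor from position $i$ to $j$. A palindrome is a word equal to its reverse. Every palindrome has a center: its middle letter if its length is odd, its middle two letters if its length is even. For $c\in\{a,b,aa\}$, $K_{(X,c)}$ denotes the set of occurrences of $c$ in $X$, i.e. $\{(i,c): X[i..i+|c|-1]=c\}$; each such occurrence is regarded as the center of exactly one maximal palindrome occurrence (the longest palindromic factor of $X$ centered there), so $K_{(X,c)}$ is the set of maximal palindrome occurrences in $X$ with center $c$. $K_X=K_{(X,a)}\cup K_{(X,aa)}\cup K_{(X,b)}$. *)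

theory Defs
  imports Main
begin

datatype letter = a | b

type_synonym word = "letter list"

definition cnt :: "word \<Rightarrow> letter \<Rightarrow> nat" where
  "cnt X l = length (filter (\<lambda>x. x = l) X)"

definition factors_inf :: "(nat \<Rightarrow> letter) \<Rightarrow> nat \<Rightarrow> word set" where
  "factors_inf w n = {map w [i..<i+n] | i. True}"

definition eventually_periodic :: "(nat \<Rightarrow> letter) \<Rightarrow> bool" where
  "eventually_periodic w \<longleftrightarrow> (\<exists>q>0. \<exists>N. \<forall>i\<ge>N. w (i + q) = w i)"

definition sturmian :: "(nat \<Rightarrow> letter) \<Rightarrow> bool" where
  "sturmian w \<longleftrightarrow> \<not> eventually_periodic w \<and> (\<forall>n. card (factors_inf w n) = n + 1)"

definition finite_sturmian :: "word \<Rightarrow> bool" where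
  "finite_sturmian X \<longleftrightarrow> (\<exists>w. sturmian w \<and> (\<exists>i. X = map w [i..<i + length X]))"

definition alpha :: "nat \<Rightarrow> nat \<Rightarrow> word \<Rightarrow> word" where
  "alpha p p' Y = concat (map (\<lambda>l. case l of a \<Rightarrow> replicate p a @ [b] | b \<Rightarrow> replicate p' a @ [b]) Y)"

text \<open>K_(X,c): occurrences (i,c) of c in X, each the center of a maximal palindrome occurrence.\<close>
definition K :: "word \<Rightarrow> word \<Rightarrow> (nat \<times> word) set" where
  "K X c = {(i, c) | i. i + length c \<le> length X \<and> take (length c) (drop i X) = c}"

definition K_all :: "word \<Rightarrow> (nat \<times> word) set" where
  "K_all X = K X [a] \<union> K X [a, a] \<union> K X [b]"

end

theory Submission
  imports Defs
begin

definition occ :: "word \<Rightarrow> word \<Rightarrow> nat" where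
  "occ X c = card {i. i + length c \<le> length X \<and> take (length c) (drop i X) = c}"

lemma occ_set_fin: "finite {i. i + length c \<le> length X \<and> take (length c) (drop i X) = c}"
  by (rule finite_subset[of _ "{..length X}"]) auto

lemma K_card: "card (K X c) = occ X c"
proof -
  have "K X c = (\<lambda>i. (i, c)) ` {i. i + length c \<le> length X \<and> take (length c) (drop i X) = c}"
    unfolding K_def by auto
  moreover have "inj (\<lambda>i::nat. (i, c))" by (auto simp: inj_def)
  ultimately show ?thesis unfolding occ_def by (simp add: card_image inj_on_def)
qed

lemma K_fin: "finite (K X c)"
proof -
  have "K X c = (\<lambda>i. (i, c)) ` {i. i + length c \<le> length X \<and> take (length c) (drop i X) = c}"
    unfolding K_def by auto
  then show ?thesis by (simp only:) (rule finite_imageI[OF occ_set_fin])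
qed

lemma occ_Nil: "c \<noteq> [] \<Longrightarrow> occ [] c = 0"
  unfolding occ_def by simp

lemma occ_Cons:
  assumes "c \<noteq> []"
  shows "occ (x#xs) c = (if length c \<le> Suc (length xs) \<and> take (length c) (x#xs) = c then 1 else 0) + occ xs c"
proof -
  let ?A = "{i. i + length c \<le> length xs \<and> take (length c) (drop i xs) = c}"
  let ?P = "length c \<le> Suc (length xs) \<and> take (length c) (x#xs) = c"
  have eq: "{i. i + length c \<le> length (x#xs) \<and> take (length c) (drop i (x#xs)) = c}
      = (if ?P then {0} else {}) \<union> Suc ` ?A"
  proof (rule set_eqI)
    fix i show "i \<in> {i. i + length c \<le> length (x#xs) \<and> take (length c) (drop i (x#xs)) = c} \<longleftrightarrow>
        i \<in> (if ?P then {0} else {}) \<union> Suc ` ?A"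
      by (cases i) auto
  qed
  have fin: "finite (Suc ` ?A)" using occ_set_fin by (rule finite_imageI)
  have d: "0 \<notin> Suc ` ?A" by auto
  show ?thesis unfolding occ_def eq
    using fin d by (simp add: card_image)
qed

lemma occ_single: "occ X [l] = cnt X l"
  by (induction X) (auto simp: occ_Nil occ_Cons cnt_def)

lemma occ_aa_block: "occ (replicate n a @ b # v) [a,a] = (n - 1) + occ v [a,a]"
proof (induction n rule: nat_less_induct)
  case (1 n)
  show ?case
  proof (cases n)
    case 0 then show ?thesis by (simp add: occ_Cons)
  next
    case (Suc m)
    show ?thesis
    proof (cases m)
      case 0 then show ?thesis using Suc by (simp add: occ_Cons)
    next
      case (Suc k)
      have "occ (replicate m a @ b # v) [a,a] = (m - 1) + occ v [a,a]" using 1 \<open>n = Suc m\<close> by simp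
      then show ?thesis using \<open>n = Suc m\<close> Suc by (simp add: occ_Cons)
    qed
  qed
qed

definition blk :: "nat \<Rightarrow> nat \<Rightarrow> letter \<Rightarrow> word" where
  "blk p p' l = (case l of a \<Rightarrow> replicate p a @ [b] | b \<Rightarrow> replicate p' a @ [b])"

lemma alpha_Cons: "alpha p p' (y#Y) = blk p p' y @ alpha p p' Y"
  by (simp add: alpha_def blk_def)

lemma alpha_Nil: "alpha p p' [] = []" by (simp add: alpha_def)

lemma cnt_app: "cnt (u @ v) l = cnt u l + cnt v l" by (simp add: cnt_def)

lemma cnt_a: "cnt (alpha p p' Y) a = p * cnt Y a + p' * cnt Y b"
  by (induction Y) (auto simp: alpha_Nil alpha_Cons cnt_app blk_def cnt_def split: letter.splits)

lemma cnt_b: "cnt (alpha p p' Y) b = length Y"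
  by (induction Y) (auto simp: alpha_Nil alpha_Cons cnt_app blk_def cnt_def split: letter.splits)

lemma len_alpha: "length (alpha p p' Y) = (p+1) * cnt Y a + (p'+1) * cnt Y b"
  by (induction Y) (auto simp: alpha_Nil alpha_Cons blk_def cnt_def split: letter.splits)

lemma len_cnt: "length Y = cnt Y a + cnt Y b"
proof (induction Y)
  case (Cons y Y) then show ?case by (cases y) (auto simp: cnt_def)
qed (simp add: cnt_def)

lemma occ_aa: "occ (alpha p p' Y) [a,a] = (p - 1) * cnt Y a + (p' - 1) * cnt Y b"
proof (induction Y)
  case Nil then show ?case by (simp add: alpha_Nil occ_Nil cnt_def)
next
  case (Cons y Y)
  show ?case
  proof (cases y)
    case la: a
    have "occ (alpha p p' (y#Y)) [a,a] = (p - 1) + occ (alpha p p' Y) [a,a]"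
      using occ_aa_block[of p "alpha p p' Y"] by (simp add: alpha_Cons blk_def la)
    then show ?thesis using Cons by (simp add: la cnt_def)
  next
    case lb: b
    have "occ (alpha p p' (y#Y)) [a,a] = (p' - 1) + occ (alpha p p' Y) [a,a]"
      using occ_aa_block[of p' "alpha p p' Y"] by (simp add: alpha_Cons blk_def lb)
    then show ?thesis using Cons by (simp add: lb cnt_def)
  qed
qed

lemma K_all_card: "card (K_all X) = occ X [a] + occ X [a,a] + occ X [b]"
proof -
  have d1: "K X [a] \<inter> K X [a,a] = {}" by (auto simp: K_def)
  have d2: "(K X [a] \<union> K X [a,a]) \<inter> K X [b] = {}" by (auto simp: K_def)
  show ?thesis unfolding K_all_def
    by (simp add: card_Un_disjoint K_fin d1 d2 K_card)
qed

theorem theorem1: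
  fixes p p' :: nat and Y X :: word
  assumes "p \<ge> 1" and "p' \<ge> 1" and "p = p' + 1 \<or> p' = p + 1"
    and "X = alpha p p' Y" and "finite_sturmian X"
  shows "card (K X [a]) = p * cnt Y a + p' * cnt Y b
    \<and> card (K X [b]) = length Y
    \<and> card (K X [a, a]) = (p - 1) * cnt Y a + (p' - 1) * cnt Y b
    \<and> int (card (K_all X)) = 2 * int (length X) - 2 * int (length Y)
    \<and> (p > p' \<longrightarrow> card (K_all X) = 2 * cnt Y a + 2 * p' * length Y)
    \<and> (p < p' \<longrightarrow> card (K_all X) = 2 * cnt Y b + 2 * p * length Y)"
proof -
  have A: "card (K X [a]) = p * cnt Y a + p' * cnt Y b"
    using assms(4) by (simp add: K_card occ_single cnt_a)
  have B: "card (K X [b]) = length Y"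
    using assms(4) by (simp add: K_card occ_single cnt_b)
  have C: "card (K X [a, a]) = (p - 1) * cnt Y a + (p' - 1) * cnt Y b"
    using assms(4) by (simp add: K_card occ_aa)
  have T: "card (K_all X) = (p * cnt Y a + p' * cnt Y b) + ((p - 1) * cnt Y a + (p' - 1) * cnt Y b) + length Y"
    using A B C by (simp add: K_all_card K_card)
  have L: "length X = (p+1) * cnt Y a + (p'+1) * cnt Y b" using assms(4) len_alpha by simp
  have Y: "length Y = cnt Y a + cnt Y b" by (rule len_cnt)
  obtain q q' where q: "p = Suc q" "p' = Suc q'" using assms(1,2) by (metis Suc_le_D One_nat_def)
  have T2: "card (K_all X) = 2 * p * cnt Y a + 2 * p' * cnt Y b"
    unfolding T q Y by simp
  have D: "int (card (K_all X)) = 2 * int (length X) - 2 * int (length Y)"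
    unfolding T2 L Y q by simp
  have E: "p > p' \<longrightarrow> card (K_all X) = 2 * cnt Y a + 2 * p' * length Y"
  proof
    assume "p > p'" then have "p = p' + 1" using assms(3) by auto
    then show "card (K_all X) = 2 * cnt Y a + 2 * p' * length Y"
      unfolding T2 Y by (simp add: algebra_simps)
  qed
  have F: "p < p' \<longrightarrow> card (K_all X) = 2 * cnt Y b + 2 * p * length Y"
  proof
    assume "p < p'" then have "p' = p + 1" using assms(3) by auto
    then show "card (K_all X) = 2 * cnt Y b + 2 * p * length Y"
      unfolding T2 Y by (simp add: algebra_simps)
  qed
  show ?thesis using A B C D E F by blast
qed

end
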